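(* Let $d \ge 1$ be an integer, let $X_0, X_1, \dots$ be independent random variables each taking the value $1$ with probability $1/4$ and $0$ with probability $3/4$, and let $$P_d = P\Big(\exists N > 0 : \sum_{k=0}^{N-1} X_k < \tfrac{N}{d}\Big).$$ If $d \le 4$ then $P_d = 1$. If $d > 4$ then the polynomial $g_d(z) = z^d - 4z + 3$ has exactly one root in the open unit disk, this root is real and lies in $(3/4,1)$, and $P_d$ equals this root. *)

theory Defs
  imports "HOL-Probability.Probability"
begin

end

theory Submission
  imports Defs
begin

fun stp :: "nat \<Rightarrow> bool \<Rightarrow> int" where "stp d b = (if b then int d - 1 else -1)"

fun hits :: "nat \<Rightarrow> bool list \<Rightarrow> int \<Rightarrow> bool" where
  "hits d [] h = False"
| "hits d (b#bs) h = (h + stp d b < 0 \<or> hits d bs (h + stp d b))"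

fun FF :: "nat \<Rightarrow> nat \<Rightarrow> int \<Rightarrow> real" where
  "FF d 0 h = (if h < 0 then 1 else 0)"
| "FF d (Suc n) h = (if h < 0 then 1 else 3/4 * FF d n (h-1) + 1/4 * FF d n (h + int d - 1))"

definition wt :: "bool list \<Rightarrow> real" where
  "wt bs = prod_list (map (\<lambda>b. if b then 1/4 else 3/4) bs)"

lemma FF_nonneg: "0 \<le> FF d n h"
  by (induction n arbitrary: h) auto

lemma FF_le1: "FF d n h \<le> 1"
proof (induction n arbitrary: h)
  case (Suc n)
  have "FF d n (h-1) \<le> 1" "FF d n (h + int d - 1) \<le> 1" using Suc by auto
  then show ?case by auto
qed auto

lemma FF_mono_Suc: "FF d n h \<le> FF d (Suc n) h"
proof (induction n arbitrary: h)
  case 0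
  then show ?case using FF_nonneg[of d 0] by auto
next
  case (Suc n)
  then show ?case using Suc[of "h-1"] Suc[of "h + int d - 1"]
    by (simp del: FF.simps(2) add: FF.simps(2)[of d n] FF.simps(2)[of d "Suc n"])
qed

lemma FF_mono_n: "m \<le> n \<Longrightarrow> FF d m h \<le> FF d n h"
proof (induction n rule: dec_induct)
  case (step k)
  then show ?case using FF_mono_Suc[of d k h] by linarith
qed simp

lemma FF_anti: "x \<le> y \<Longrightarrow> FF d n y \<le> FF d n x"
proof (induction n arbitrary: x y)
  case 0
  then show ?case by auto
next
  case (Suc n)
  show ?case
  proof (cases "x < 0")
    case True
    then show ?thesis using FF_le1[of d "Suc n" y] by simp
  next
    case False
    then show ?thesis using Suc.prems Suc.IH[of "x-1" "y-1"] Suc.IH[of "x + int d - 1" "y + int d - 1"]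
      by simp
  qed
qed

lemma FF_upper:
  assumes r0: "0 \<le> r" and req: "r = 3/4 + r^d/4"
  shows "FF d n h \<le> r ^ nat (h+1)"
proof (induction n arbitrary: h)
  case 0
  then show ?case using r0 by auto
next
  case (Suc n)
  show ?case
  proof (cases "h < 0")
    case True
    then show ?thesis by simp
  next
    case False
    have e1: "nat (h - 1 + 1) = nat h" by simp
    have e2: "nat (h + int d - 1 + 1) = nat h + d" using False by simp
    have "FF d (Suc n) h = 3/4 * FF d n (h-1) + 1/4 * FF d n (h + int d - 1)" using False by simp
    also have "\<dots> \<le> 3/4 * r ^ nat h + 1/4 * r ^ (nat h + d)"
      using Suc[of "h-1"] Suc[of "h + int d - 1"] unfolding e1 e2 by simp
    also have "\<dots> = r ^ nat h * (3/4 + r^d/4)" by (simp add: power_add algebra_simps)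
    also have "\<dots> = r ^ nat (h+1)" using False req
      by (metis Suc_nat_eq_nat_zadd1 add.commute not_less power_Suc2)
    finally show ?thesis .
  qed
qed

lemma FF_super:
  assumes "0 \<le> h"
  shows "FF d a j * FF d b h \<le> FF d (a+b) (j+h+1)"
proof (induction a arbitrary: j)
  case 0
  show ?case
  proof (cases "j < 0")
    case True
    then show ?thesis using FF_anti[of "j+h+1" h d b] by simp
  next
    case False
    then show ?thesis using FF_nonneg[of d b] by simp
  qed
next
  case (Suc a)
  show ?case
  proof (cases "j < 0")
    case True
    then show ?thesis using FF_anti[of "j+h+1" h d b] FF_mono_n[of b "Suc a + b" d "j+h+1"] by simp
  next
    case False
    have j1: "j + h + 1 \<ge> 0" using False assms by simp
    have "FF d (Suc a) j * FF d b h = 3/4 * (FF d a (j-1) * FF d b h) + 1/4 * (FF d a (j + int d - 1) * FF d b h)"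
      using False by (simp add: algebra_simps)
    also have "\<dots> \<le> 3/4 * FF d (a+b) (j-1+h+1) + 1/4 * FF d (a+b) (j + int d - 1 + h + 1)"
      using Suc[of "j-1"] Suc[of "j + int d - 1"] by simp
    also have "\<dots> = FF d (Suc a + b) (j+h+1)" using j1 by (simp add: algebra_simps)
    finally show ?thesis .
  qed
qed

definition LL :: "nat \<Rightarrow> bool list set" where "LL n = {bs. length bs = n}"

lemma finite_LL: "finite (LL n)" unfolding LL_def using finite_lists_length_eq[of "UNIV::bool set" n] by simp

lemma LL_Suc: "LL (Suc n) = Cons True ` LL n \<union> Cons False ` LL n"
  unfolding LL_def by (auto simp: length_Suc_conv image_iff)

lemma sum_LL_Suc: "(\<Sum>bs\<in>LL (Suc n). g bs) = (\<Sum>bs\<in>LL n. g (True#bs)) + (\<Sum>bs\<in>LL n. g (False#bs))"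
proof -
  have "(\<Sum>bs\<in>LL (Suc n). g bs) = (\<Sum>bs\<in>Cons True ` LL n. g bs) + (\<Sum>bs\<in>Cons False ` LL n. g bs)"
    unfolding LL_Suc by (rule sum.union_disjoint) (auto simp: finite_LL)
  also have "\<dots> = (\<Sum>bs\<in>LL n. g (True#bs)) + (\<Sum>bs\<in>LL n. g (False#bs))"
    by (simp add: sum.reindex)
  finally show ?thesis .
qed

lemma wt_Cons: "wt (b#bs) = (if b then 1/4 else 3/4) * wt bs"
  by (simp add: wt_def)

lemma wt_sum: "(\<Sum>bs\<in>LL n. wt bs) = 1"
proof (induction n)
  case 0
  then show ?case by (simp add: LL_def wt_def)
next
  case (Suc n)
  have "(\<Sum>bs\<in>LL (Suc n). wt bs) = 1/4 * (\<Sum>bs\<in>LL n. wt bs) + 3/4 * (\<Sum>bs\<in>LL n. wt bs)"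
    by (simp add: sum_LL_Suc wt_Cons sum_distrib_left)
  then show ?case using Suc by simp
qed

lemma FF_sum: "(\<Sum>bs\<in>LL n. if h < 0 \<or> hits d bs h then wt bs else 0) = FF d n h"
proof (induction n arbitrary: h)
  case 0
  then show ?case by (simp add: LL_def wt_def)
next
  case (Suc n)
  show ?case
  proof (cases "h < 0")
    case True
    then show ?thesis using wt_sum[of "Suc n"] by simp
  next
    case False
    have "(\<Sum>bs\<in>LL (Suc n). if h < 0 \<or> hits d bs h then wt bs else 0)
      = 1/4 * (\<Sum>bs\<in>LL n. if h + int d - 1 < 0 \<or> hits d bs (h + int d - 1) then wt bs else 0)
       + 3/4 * (\<Sum>bs\<in>LL n. if h - 1 < 0 \<or> hits d bs (h - 1) then wt bs else 0)"
      using False unfolding sum_LL_Suc sum_distrib_left wt_Cons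
      by (simp add: if_distrib[of "\<lambda>x. c * x" for c] add.commute add_diff_eq cong: if_cong)
    also have "\<dots> = FF d (Suc n) h" using False Suc[of "h + int d - 1"] Suc[of "h-1"] by simp
    finally show ?thesis .
  qed
qed

definition psi :: "nat \<Rightarrow> real \<Rightarrow> real" where "psi d z = (\<Sum>i<d. z^i) - 4"

lemma factor: "(z::'a::comm_ring_1)^d - 4*z + 3 = (z - 1) * ((\<Sum>i<d. z^i) - 4)"
proof -
  have "1 - z^d = (1 - z) * (\<Sum>i<d. z^i)" by (rule one_diff_power_eq)
  then show ?thesis by (simp add: algebra_simps)
qed

lemma psi_mono:
  assumes "d > 1" "0 \<le> x" "x < y"
  shows "psi d x < psi d y"
proof -
  have "(\<Sum>i<d. x^i) < (\<Sum>i<d. y^i)"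
  proof (rule sum_strict_mono_ex1)
    show "\<forall>i\<in>{..<d}. x^i \<le> y^i" using assms by (auto intro: power_mono)
    show "\<exists>i\<in>{..<d}. x^i < y^i" using assms by (intro bexI[of _ 1]) auto
  qed auto
  then show ?thesis by (simp add: psi_def)
qed

lemma psi_small_d:
  assumes "1 \<le> d" "d \<le> 4" "0 \<le> q" "q < 1"
  shows "psi d q < 0"
proof (cases "d = 1")
  case True then show ?thesis by (simp add: psi_def)
next
  case False
  have "(\<Sum>i<d. q^i) < (\<Sum>i<d. 1)"
  proof (rule sum_strict_mono_ex1)
    show "\<forall>i\<in>{..<d}. q^i \<le> 1" using assms by (auto intro: power_le_one)
    show "\<exists>i\<in>{..<d}. q^i < 1" using assms False by (intro bexI[of _ 1]) auto
  qed auto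
  then show ?thesis using assms by (simp add: psi_def)
qed

lemma root_exists:
  assumes "d > 4"
  shows "\<exists>r. 3/4 < r \<and> r < 1 \<and> psi d r = 0"
proof -
  have s: "(\<Sum>i<d. (3/4::real)^i) = 4 * (1 - (3/4)^d)"
    using one_diff_power_eq[of "3/4::real" d] by simp
  have a: "psi d (3/4) < 0" unfolding psi_def s by simp
  have b: "psi d 1 > 0" using assms unfolding psi_def by simp
  have c: "continuous_on {3/4..1} (psi d)" unfolding psi_def by (intro continuous_intros)
  obtain r where r: "3/4 \<le> r" "r \<le> 1" "psi d r = 0"
    using IVT'[of "psi d" "3/4" 0 1, OF _ _ _ c] a b by auto
  have "r \<noteq> 3/4"
  proof
    assume h: "r = 3/4"
    from r(3) have "psi d (3/4) = 0" unfolding h .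
    with a show False by simp
  qed
  moreover have "r \<noteq> 1"
  proof
    assume h: "r = 1"
    from r(3) have "psi d 1 = 0" unfolding h .
    with b show False by simp
  qed
  ultimately show ?thesis using r by (intro exI[of _ r]) auto
qed

lemma root_props:
  assumes d: "d > 4" and r: "3/4 < r" "r < 1" "psi d r = 0"
  shows "r^d - 4*r + 3 = 0"
    and "real d * r^(d-1) < 4"
    and "\<And>t::real. 0 \<le> t \<Longrightarrow> t < 1 \<Longrightarrow> t^d - 4*t + 3 \<le> 0 \<Longrightarrow> r \<le> t"
    and "\<And>t::real. 0 \<le> t \<Longrightarrow> t < 1 \<Longrightarrow> t^d - 4*t + 3 \<ge> 0 \<Longrightarrow> t \<le> r"
proof -
  show "r^d - 4*r + 3 = 0" using factor[of r d] r by (simp add: psi_def)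
  have "(\<Sum>i<d. r^(d-1)) < (\<Sum>i<d. r^i)"
  proof (rule sum_strict_mono_ex1)
    show "\<forall>i\<in>{..<d}. r^(d-1) \<le> r^i" using r by (auto intro: power_decreasing)
    show "\<exists>i\<in>{..<d}. r^(d-1) < r^i" using r d by (intro bexI[of _ 0]) (auto simp: power_less_one_iff)
  qed auto
  then show "real d * r^(d-1) < 4" using r by (simp add: psi_def)
  fix t :: real assume t: "0 \<le> t" "t < 1"
  {
    assume "t^d - 4*t + 3 \<le> 0"
    then have "(t - 1) * psi d t \<le> 0" using factor[of t d] by (simp add: psi_def)
    then have "psi d t \<ge> 0" using t by (simp add: mult_le_0_iff)
    then show "r \<le> t" using psi_mono[of d t r] d t r by force
  next
    assume "t^d - 4*t + 3 \<ge> 0"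
    then have "(t - 1) * psi d t \<ge> 0" using factor[of t d] by (simp add: psi_def)
    then have "psi d t \<le> 0" using t by (simp add: zero_le_mult_iff)
    then show "t \<le> r" using psi_mono[of d r t] d t r by force
  }
qed

lemma disk_roots:
  assumes d: "d > 4" and r: "3/4 < r" "r < 1" "psi d r = 0"
  shows "{z::complex. cmod z < 1 \<and> z ^ d - 4 * z + 3 = 0} = {complex_of_real r}"
proof -
  note rp = root_props[OF assms]
  have rc: "(complex_of_real r)^d - 4 * complex_of_real r + 3 = 0"
    using arg_cong[OF rp(1), of complex_of_real] by simp
  {
    fix z :: complex assume z: "cmod z < 1" "z ^ d - 4 * z + 3 = 0"
    define t where "t = cmod z"
    have t0: "0 \<le> t" "t < 1" using z by (auto simp: t_def)
    have "z^d + 3 = (z^d - 4*z + 3) + 4*z" by simp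
    also have "\<dots> = 4 * z" using z(2) by simp
    finally have "4 * t = cmod (z^d + 3)" unfolding t_def by (simp add: norm_mult)
    also have "\<dots> \<le> cmod (z^d) + cmod (3::complex)" by (rule norm_triangle_ineq)
    also have "\<dots> = t^d + 3" unfolding t_def by (simp add: norm_power)
    finally have "t^d - 4*t + 3 \<ge> 0" by simp
    then have tr: "t \<le> r" using rp(4)[OF t0] by simp
    let ?r = "complex_of_real r"
    have "z^d - ?r^d = (z^d - 4*z+3) - (?r^d - 4*?r + 3) + 4*(z - ?r)" by (simp add: algebra_simps)
    also have "\<dots> = 4 * (z - ?r)" using z(2) rc by simp
    finally have "z^d - ?r^d = 4 * (z - ?r)" .
    moreover have "z^d - ?r^d = (z - ?r) * (\<Sum>i<d. ?r^(d - Suc i) * z^i)" by (rule power_diff_sumr2)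
    ultimately have "4 * (z - ?r) = (z - ?r) * (\<Sum>i<d. ?r^(d - Suc i) * z^i)" by simp
    then have eq: "4 * cmod (z - ?r) = cmod (z - ?r) * cmod (\<Sum>i<d. ?r^(d - Suc i) * z^i)"
      by (metis norm_mult norm_numeral)
    have "cmod (\<Sum>i<d. ?r^(d - Suc i) * z^i) \<le> (\<Sum>i<d. cmod (?r^(d - Suc i) * z^i))"
      by (rule norm_sum)
    also have "\<dots> \<le> (\<Sum>i<d. r^(d-1))"
    proof (rule sum_mono)
      fix i assume i: "i \<in> {..<d}"
      have "cmod (?r^(d - Suc i) * z^i) = r^(d - Suc i) * t^i"
        using r by (simp add: norm_mult norm_power t_def)
      also have "\<dots> \<le> r^(d - Suc i) * r^i"
        using r t0 tr by (intro mult_left_mono power_mono) auto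
      also have "\<dots> = r^(d-1)" using i by (simp add: power_add[symmetric])
      finally show "cmod (?r^(d - Suc i) * z^i) \<le> r^(d-1)" .
    qed
    also have "\<dots> = real d * r^(d-1)" by simp
    finally have "cmod (\<Sum>i<d. ?r^(d - Suc i) * z^i) < 4" using rp(2) by simp
    then have "cmod (z - ?r) = 0"
    proof -
      assume lt: "cmod (\<Sum>i<d. ?r^(d - Suc i) * z^i) < 4"
      show ?thesis
      proof (rule ccontr)
        assume "cmod (z - ?r) \<noteq> 0"
        with eq have "4 = cmod (\<Sum>i<d. ?r^(d - Suc i) * z^i)" by simp
        with lt show False by simp
      qed
    qed
    then have "z = ?r" by simp
  }
  moreover have "cmod (complex_of_real r) < 1" using r by simp
  ultimately show ?thesis using rc by auto
qed

lemma FF_neg: "h < 0 \<Longrightarrow> FF d n h = 1" by (cases n) auto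

lemma limit_part:
  assumes d: "d \<ge> 1" and q: "(\<lambda>n. FF d n 0) \<longlonglongrightarrow> q"
  shows "(d \<le> 4 \<longrightarrow> q = 1) \<and>
         (d > 4 \<longrightarrow> (\<exists>r::real. 3/4 < r \<and> r < 1 \<and>
             {z::complex. cmod z < 1 \<and> z ^ d - 4 * z + 3 = 0} = {complex_of_real r} \<and>
             q = r))"
proof -
  define f where "f h = (SUP n. FF d n h)" for h
  have inc: "incseq (\<lambda>n. FF d n h)" for h by (rule incseq_SucI) (rule FF_mono_Suc)
  have conv: "(\<lambda>n. FF d n h) \<longlonglongrightarrow> f h" for h
    unfolding f_def by (rule LIMSEQ_incseq_SUP[OF _ inc]) (auto intro: bdd_aboveI2 FF_le1)
  have f0: "f 0 = q" using LIMSEQ_unique[OF conv q] .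
  have le_f: "FF d n h \<le> f h" for n h using incseq_le[OF inc conv] .
  have q0: "0 \<le> q" by (rule LIMSEQ_le_const[OF q]) (auto intro: FF_nonneg)
  have q1: "q \<le> 1" by (rule LIMSEQ_le_const2[OF q]) (auto intro: FF_le1)
  have super: "q * f h \<le> f (h+1)" if h: "0 \<le> h" for h
  proof (rule LIMSEQ_le_const2)
    show "(\<lambda>n. FF d n 0 * FF d n h) \<longlonglongrightarrow> q * f h" by (intro tendsto_mult q conv)
    show "\<exists>N. \<forall>n\<ge>N. FF d n 0 * FF d n h \<le> f (h + 1)"
    proof (intro exI allI impI)
      fix n
      have "FF d n 0 * FF d n h \<le> FF d (n+n) (0+h+1)" by (rule FF_super[OF h])
      also have "\<dots> \<le> f (h+1)" using le_f by simp
      finally show "FF d n 0 * FF d n h \<le> f (h + 1)" .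
    qed
  qed
  have pow: "q^(k+1) \<le> f (int k)" for k
  proof (induction k)
    case 0 then show ?case using f0 by simp
  next
    case (Suc k)
    have "q^(Suc k + 1) = q * q^(k+1)" by simp
    also have "\<dots> \<le> q * f (int k)" using Suc q0 by (intro mult_left_mono) auto
    also have "\<dots> \<le> f (int k + 1)" using super[of "int k"] by simp
    finally show ?case by (simp add: add.commute)
  qed
  have rec: "q = 3/4 + 1/4 * f (int d - 1)"
  proof -
    have "(\<lambda>n. FF d (Suc n) 0) \<longlonglongrightarrow> q" using q by (rule LIMSEQ_Suc)
    moreover have "(\<lambda>n. FF d (Suc n) 0) = (\<lambda>n. 3/4 + 1/4 * FF d n (int d - 1))" by (simp add: FF_neg)
    moreover have "(\<lambda>n. 3/4 + 1/4 * FF d n (int d - 1)) \<longlonglongrightarrow> 3/4 + 1/4 * f (int d - 1)"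
      by (intro tendsto_intros conv)
    ultimately show ?thesis using LIMSEQ_unique by metis
  qed
  have "int d - 1 = int (d - 1)" using d by simp
  then have "q^d \<le> f (int d - 1)" using pow[of "d-1"] d by simp
  then have gq: "q^d - 4*q + 3 \<le> 0" using rec by simp
  show ?thesis
  proof (intro conjI impI)
    assume d4: "d \<le> 4"
    show "q = 1"
    proof (rule ccontr)
      assume "q \<noteq> 1"
      then have "q < 1" using q1 by simp
      then have "psi d q < 0" using psi_small_d[OF d d4 q0] by simp
      then have "(q - 1) * ((\<Sum>i<d. q^i) - 4) > 0" using \<open>q < 1\<close> unfolding psi_def
        by (simp add: mult_neg_neg)
      then show False using gq factor[of q d] by simp
    qed
  next
    assume d4: "d > 4"
    obtain r where r: "3/4 < r" "r < 1" "psi d r = 0" using root_exists[OF d4] by blast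
    note rp = root_props[OF d4 r]
    have "r \<le> q"
    proof (cases "q = 1")
      case True then show ?thesis using r by simp
    next
      case False then show ?thesis using rp(3)[OF q0 _ gq] q1 by simp
    qed
    moreover have "q \<le> r"
    proof (rule LIMSEQ_le_const2[OF q], intro exI allI impI)
      fix n
      have "r = 3/4 + r^d/4" using rp(1) by simp
      then have "FF d n 0 \<le> r ^ nat (0+1)" using r by (intro FF_upper) auto
      then show "FF d n 0 \<le> r" by simp
    qed
    ultimately show "\<exists>r::real. 3/4 < r \<and> r < 1 \<and>
             {z::complex. cmod z < 1 \<and> z ^ d - 4 * z + 3 = 0} = {complex_of_real r} \<and> q = r"
      using r disk_roots[OF d4 r] by (intro exI[of _ r]) auto
  qed
qed

lemma wt_nth: "wt bs = (\<Prod>i<length bs. if bs!i then 1/4 else 3/4)"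
  by (induction bs) (auto simp: wt_def prod.lessThan_Suc_shift simp del: prod.lessThan_Suc)

lemma hits_map: "hits d (map s [0..<n]) h \<longleftrightarrow> (\<exists>N. 0<N \<and> N \<le> n \<and> h + (\<Sum>k<N. stp d (s k)) < 0)"
proof (induction n arbitrary: s h)
  case 0 then show ?case by auto
next
  case (Suc n)
  have "hits d (map s [0..<Suc n]) h \<longleftrightarrow> h + stp d (s 0) < 0 \<or>
     (\<exists>N. 0<N \<and> N \<le> n \<and> h + stp d (s 0) + (\<Sum>k<N. stp d (s (Suc k))) < 0)"
    by (simp only: map_upt_Suc hits.simps Suc.IH)
  also have "\<dots> \<longleftrightarrow> (\<exists>N. 0<N \<and> N \<le> Suc n \<and> h + (\<Sum>k<N. stp d (s k)) < 0)"
  proof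
    assume "h + stp d (s 0) < 0 \<or>
     (\<exists>N. 0<N \<and> N \<le> n \<and> h + stp d (s 0) + (\<Sum>k<N. stp d (s (Suc k))) < 0)"
    then show "\<exists>N. 0<N \<and> N \<le> Suc n \<and> h + (\<Sum>k<N. stp d (s k)) < 0"
    proof
      assume "h + stp d (s 0) < 0"
      then show ?thesis by (intro exI[of _ 1]) simp
    next
      assume "\<exists>N. 0<N \<and> N \<le> n \<and> h + stp d (s 0) + (\<Sum>k<N. stp d (s (Suc k))) < 0"
      then obtain N where N: "0<N" "N \<le> n" "h + stp d (s 0) + (\<Sum>k<N. stp d (s (Suc k))) < 0" by blast
      have "h + (\<Sum>k<Suc N. stp d (s k)) < 0" using N(3) unfolding sum.lessThan_Suc_shift
        by (simp add: add.assoc)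
      then show ?thesis using N by (intro exI[of _ "Suc N"]) simp
    qed
  next
    assume "\<exists>N. 0<N \<and> N \<le> Suc n \<and> h + (\<Sum>k<N. stp d (s k)) < 0"
    then obtain N where N: "0<N" "N \<le> Suc n" "h + (\<Sum>k<N. stp d (s k)) < 0" by blast
    then obtain M where M: "N = Suc M" by (cases N) auto
    show "h + stp d (s 0) < 0 \<or>
     (\<exists>N. 0<N \<and> N \<le> n \<and> h + stp d (s 0) + (\<Sum>k<N. stp d (s (Suc k))) < 0)"
    proof (cases "M = 0")
      case True
      then show ?thesis using N(3) M by simp
    next
      case False
      have "h + stp d (s 0) + (\<Sum>k<M. stp d (s (Suc k))) < 0"
        using N(3) unfolding M sum.lessThan_Suc_shift by (simp add: add.assoc)
      then show ?thesis using False N M by (intro disjI2 exI[of _ M]) auto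
    qed
  qed
  finally show ?case .
qed

theorem mainTheorem11:
  fixes M :: "'a measure" and X :: "nat \<Rightarrow> 'a \<Rightarrow> real" and d :: nat
  assumes "prob_space M"
    and "d \<ge> 1"
    and "prob_space.indep_vars M (\<lambda>_. borel) X UNIV"
    and "\<And>k. measure M {\<omega> \<in> space M. X k \<omega> = 1} = 1/4"
    and "\<And>k. measure M {\<omega> \<in> space M. X k \<omega> = 0} = 3/4"
  defines "P \<equiv> measure M {\<omega> \<in> space M. \<exists>N::nat. N > 0 \<and>
                 (\<Sum>k<N. X k \<omega>) < real N / real d}"
  shows "(d \<le> 4 \<longrightarrow> P = 1) \<and>
         (d > 4 \<longrightarrow> (\<exists>r::real. 3/4 < r \<and> r < 1 \<and>
             {z::complex. cmod z < 1 \<and> z ^ d - 4 * z + 3 = 0} = {complex_of_real r} \<and>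
             P = r))"
proof -
  interpret prob_space M by (rule assms(1))
  have ind: "indep_vars (\<lambda>_. borel) X UNIV" using assms(3) .
  have rv[measurable]: "X k \<in> borel_measurable M" for k using ind unfolding indep_vars_def2 by auto
  have indS: "indep_sets (\<lambda>i. {X i -` A \<inter> space M | A. A \<in> sets borel}) UNIV"
    using ind unfolding indep_vars_def2 by auto
  have AE01: "AE \<omega> in M. \<forall>k. X k \<omega> = 0 \<or> X k \<omega> = 1"
  proof (subst AE_all_countable, intro allI)
    fix k
    have "prob ({\<omega>\<in>space M. X k \<omega> = 0} \<union> {\<omega>\<in>space M. X k \<omega> = 1})
        = prob {\<omega>\<in>space M. X k \<omega> = 0} + prob {\<omega>\<in>space M. X k \<omega> = 1}"
      by (rule finite_measure_Union) auto
    then have "prob ({\<omega>\<in>space M. X k \<omega> = 0} \<union> {\<omega>\<in>space M. X k \<omega> = 1}) = 1"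
      using assms(4,5) by simp
    from AE_prob_1[OF this] show "AE \<omega> in M. X k \<omega> = 0 \<or> X k \<omega> = 1"
      by (rule AE_mp) auto
  qed
  define E where "E n = {\<omega>\<in>space M. \<exists>N. 0<N \<and> N\<le>n \<and> (\<Sum>k<N. X k \<omega>) < real N / real d}" for n
  have Emeas: "E n \<in> sets M" for n unfolding E_def by measurable
  have Eunion: "{\<omega> \<in> space M. \<exists>N::nat. N > 0 \<and> (\<Sum>k<N. X k \<omega>) < real N / real d} = (\<Union>n. E n)"
    unfolding E_def by blast
  have incE: "incseq E" unfolding incseq_def E_def by force
  have lim: "(\<lambda>n. measure M (E n)) \<longlonglongrightarrow> P"
    unfolding P_def Eunion by (rule finite_Lim_measure_incseq) (auto simp: Emeas incE)
  define v where "v b = (if b then 1 else 0 :: real)" for b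
  have v_inj: "v a = v b \<longleftrightarrow> a = b" for a b by (auto simp: v_def)
  define C where "C bs = {\<omega>\<in>space M. \<forall>i<length bs. X i \<omega> = v (bs!i)}" for bs
  have Cmeas: "C bs \<in> sets M" for bs unfolding C_def by measurable
  have mC: "measure M (C bs) = wt bs" for bs
  proof (cases "bs = []")
    case True then show ?thesis by (simp add: C_def wt_def prob_space)
  next
    case False
    let ?B = "\<lambda>i. X i -` {v (bs!i)} \<inter> space M"
    have "C bs = (\<Inter>i\<in>{..<length bs}. ?B i)" using False unfolding C_def by auto
    moreover have "prob (\<Inter>i\<in>{..<length bs}. ?B i) = (\<Prod>i\<in>{..<length bs}. prob (?B i))"
    proof (rule indep_setsD[OF indS])
      show "\<forall>j\<in>{..<length bs}. ?B j \<in> {X j -` A \<inter> space M |A. A \<in> sets borel}"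
      proof
        fix j assume "j \<in> {..<length bs}"
        show "?B j \<in> {X j -` A \<inter> space M |A. A \<in> sets borel}"
          by (rule CollectI, rule exI[of _ "{v (bs!j)}"]) simp
      qed
    qed (use False in auto)
    moreover have pB: "prob (?B i) = (if bs!i then 1/4 else 3/4)" for i
    proof -
      have "?B i = {\<omega>\<in>space M. X i \<omega> = v (bs!i)}" by auto
      then show ?thesis by (cases "bs!i") (simp_all add: v_def assms(4,5))
    qed
    ultimately have "measure M (C bs) = (\<Prod>i\<in>{..<length bs}. prob (?B i))" by simp
    also have "\<dots> = wt bs" unfolding wt_nth pB by simp
    finally show ?thesis .
  qed
  have mE: "measure M (E n) = FF d n 0" for n
  proof -
    define G where "G = {bs \<in> LL n. hits d bs 0}"
    have disj: "disjoint_family_on C G"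
      unfolding disjoint_family_on_def
    proof (intro ballI impI)
      fix a b assume a: "a \<in> G" "b \<in> G" "a \<noteq> b"
      then have la: "length a = n" "length b = n" by (auto simp: G_def LL_def)
      have "\<exists>i<n. a!i \<noteq> b!i"
      proof (rule ccontr)
        assume "\<not> (\<exists>i<n. a!i \<noteq> b!i)"
        then have "a = b" using la by (intro nth_equalityI) auto
        with a(3) show False by simp
      qed
      then obtain i where i: "i<n" "a!i \<noteq> b!i" by blast
      show "C a \<inter> C b = {}"
      proof (rule ccontr)
        assume "C a \<inter> C b \<noteq> {}"
        then obtain \<omega> where "\<omega> \<in> C a" "\<omega> \<in> C b" by blast
        then have "X i \<omega> = v (a!i)" "X i \<omega> = v (b!i)" using i la unfolding C_def by auto
        then show False using i v_inj by metis
      qed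
    qed
    have finG: "finite G" using finite_LL by (simp add: G_def)
    have "measure M (\<Union>bs\<in>G. C bs) = (\<Sum>bs\<in>G. measure M (C bs))"
      by (rule measure_finite_Union[OF finG]) (auto simp: Cmeas disj)
    also have "\<dots> = (\<Sum>bs\<in>G. wt bs)" using mC by simp
    also have "\<dots> = FF d n 0" unfolding G_def sum.inter_filter[OF finite_LL] using FF_sum[where n=n and h=0 and d=d] by simp
    finally have U: "measure M (\<Union>bs\<in>G. C bs) = FF d n 0" .
    have "measure M (E n) = measure M (\<Union>bs\<in>G. C bs)"
    proof (rule measure_eq_AE)
      show "AE \<omega> in M. \<omega> \<in> E n \<longleftrightarrow> \<omega> \<in> (\<Union>bs\<in>G. C bs)"
        using AE01
      proof (rule AE_mp, intro AE_I2 impI)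
        fix \<omega> assume \<omega>: "\<omega> \<in> space M" and o01: "\<forall>k. X k \<omega> = 0 \<or> X k \<omega> = 1"
        define s where "s k = (X k \<omega> = 1)" for k
        let ?bs = "map s [0..<n]"
        have vs: "X k \<omega> = v (s k)" for k using o01[rule_format, of k] by (auto simp: v_def s_def)
        have st: "real_of_int (stp d (s k)) = real d * X k \<omega> - 1" for k
          unfolding vs by (simp add: v_def)
        have key: "(\<Sum>k<N. X k \<omega>) < real N / real d \<longleftrightarrow> 0 + (\<Sum>k<N. stp d (s k)) < 0" for N
        proof -
          have "real_of_int (\<Sum>k<N. stp d (s k)) = real d * (\<Sum>k<N. X k \<omega>) - real N"
            unfolding of_int_sum st by (simp add: sum_subtractf sum_distrib_left)
          moreover have "(\<Sum>k<N. X k \<omega>) < real N / real d \<longleftrightarrow> real d * (\<Sum>k<N. X k \<omega>) < real N"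
            using assms(2) by (simp add: pos_less_divide_eq mult.commute)
          ultimately show ?thesis by linarith
        qed
        have "\<omega> \<in> E n \<longleftrightarrow> (\<exists>N. 0<N \<and> N\<le>n \<and> 0 + (\<Sum>k<N. stp d (s k)) < 0)"
          unfolding E_def using \<omega> key by auto
        also have "\<dots> \<longleftrightarrow> hits d ?bs 0" by (rule hits_map[symmetric])
        also have "\<dots> \<longleftrightarrow> \<omega> \<in> (\<Union>bs\<in>G. C bs)"
        proof
          assume h: "hits d ?bs 0"
          have "?bs \<in> G" using h by (simp add: G_def LL_def)
          moreover have "\<omega> \<in> C ?bs" using \<omega> vs by (simp add: C_def)
          ultimately show "\<omega> \<in> (\<Union>bs\<in>G. C bs)" by blast
        next
          assume "\<omega> \<in> (\<Union>bs\<in>G. C bs)"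
          then obtain bs where bs: "bs \<in> G" "\<omega> \<in> C bs" by blast
          have lb: "length bs = n" using bs(1) by (simp add: G_def LL_def)
          have "bs = ?bs"
          proof (rule nth_equalityI)
            show "length bs = length ?bs" using lb by simp
            fix i assume "i < length bs"
            then have "v (bs!i) = v (s i)" using bs(2) vs[of i] unfolding C_def by auto
            then show "bs!i = ?bs!i" using \<open>i < length bs\<close> lb v_inj by simp
          qed
          then show "hits d ?bs 0" using bs(1) by (simp add: G_def)
        qed
        finally show "\<omega> \<in> E n \<longleftrightarrow> \<omega> \<in> (\<Union>bs\<in>G. C bs)" .
      qed
      show "E n \<in> sets M" by (rule Emeas)
      show "(\<Union>bs\<in>G. C bs) \<in> sets M" using finG Cmeas by auto
    qed
    with U show ?thesis by simp
  qed
  have "(\<lambda>n. FF d n 0) \<longlonglongrightarrow> P" using lim unfolding mE .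
  then show ?thesis using limit_part[OF assms(2)] by blast
qed

end
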